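(* Let $G$ be a connected graph of order $n\geq 4$ and let $k$ be an integer with $3\leq k\leq n$. Then $px_k(G)=n-1$ if and only if $G\cong S_n$, the star on $n$ vertices.
   Context: All graphs are finite, simple, undirected and connected. An edge-coloring of a graph assigns a color to each edge (adjacent edges may receive the same color). A tree in an edge-colored graph is proper if any two adjacent edges of the tree receive different colors. For $S\subseteq V(G)$, an $S$-tree is a subgraph of $G$ that is a tree containing all vertices of $S$. For a connected graph $G$ of order $n$ and an integer $k$ with $2\le k\le n$, an edge-coloring of $G$ is a $k$-proper coloring if for every set $S$ of $k$ vertices of $G$ there exists a proper $S$-tree in $G$. The $k$-proper index $px_k(G)$ is the minimum number of colors used in a $k$-proper coloring of $G$. The star $S_n$ is the tree $K_{1,n-1}$ on $n$ vertices. *)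

theory Defs
  imports Main
begin

definition graph :: "'a set \<Rightarrow> 'a set set \<Rightarrow> bool" where
  "graph V E \<longleftrightarrow> finite V \<and> (\<forall>e\<in>E. \<exists>x y. e = {x, y} \<and> x \<noteq> y \<and> x \<in> V \<and> y \<in> V)"

definition adj_rel :: "'a set set \<Rightarrow> ('a \<times> 'a) set" where
  "adj_rel E = {(x, y). {x, y} \<in> E}"

definition connected_graph :: "'a set \<Rightarrow> 'a set set \<Rightarrow> bool" where
  "connected_graph V E \<longleftrightarrow> V \<noteq> {} \<and> (\<forall>u\<in>V. \<forall>v\<in>V. (u, v) \<in> (adj_rel E)\<^sup>*)"

definition is_subtree :: "'a set \<Rightarrow> 'a set set \<Rightarrow> 'a set \<Rightarrow> 'a set set \<Rightarrow> bool" where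
  "is_subtree V E V' E' \<longleftrightarrow> V' \<subseteq> V \<and> E' \<subseteq> E \<and> (\<forall>e\<in>E'. e \<subseteq> V')
     \<and> connected_graph V' E' \<and> card E' + 1 = card V'"

definition proper_edges :: "('a set \<Rightarrow> 'c) \<Rightarrow> 'a set set \<Rightarrow> bool" where
  "proper_edges c E' \<longleftrightarrow> (\<forall>e1\<in>E'. \<forall>e2\<in>E'. e1 \<noteq> e2 \<and> e1 \<inter> e2 \<noteq> {} \<longrightarrow> c e1 \<noteq> c e2)"

definition k_proper_coloring :: "nat \<Rightarrow> 'a set \<Rightarrow> 'a set set \<Rightarrow> ('a set \<Rightarrow> nat) \<Rightarrow> bool" where
  "k_proper_coloring k V E c \<longleftrightarrow>
     (\<forall>S. S \<subseteq> V \<and> card S = k \<longrightarrow>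
        (\<exists>V' E'. is_subtree V E V' E' \<and> S \<subseteq> V' \<and> proper_edges c E'))"

definition proper_index :: "nat \<Rightarrow> 'a set \<Rightarrow> 'a set set \<Rightarrow> nat" where
  "proper_index k V E = (LEAST m. \<exists>c. k_proper_coloring k V E c \<and> card (c ` E) = m)"

definition graph_iso :: "'a set \<Rightarrow> 'a set set \<Rightarrow> 'b set \<Rightarrow> 'b set set \<Rightarrow> bool" where
  "graph_iso V E V' E' \<longleftrightarrow> (\<exists>f. bij_betw f V V' \<and>
     (\<forall>x\<in>V. \<forall>y\<in>V. {x, y} \<in> E \<longleftrightarrow> {f x, f y} \<in> E'))"

definition star_vertices :: "nat \<Rightarrow> nat set" where
  "star_vertices n = {0..<n}"

definition star_edges :: "nat \<Rightarrow> nat set set" where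
  "star_edges n = {{0, i} | i. 0 < i \<and> i < n}"

end

theory Submission
  imports Defs
begin


lemma edge_two: "graph V E \<Longrightarrow> e \<in> E \<Longrightarrow> \<exists>a b. e = {a,b} \<and> a \<noteq> b \<and> a \<in> V \<and> b \<in> V"
proof -
  assume g: "graph V E" and e: "e \<in> E"
  from g have "\<forall>e\<in>E. \<exists>x y. e = {x, y} \<and> x \<noteq> y \<and> x \<in> V \<and> y \<in> V" by (simp add: graph_def)
  with e show ?thesis by (rule bspec[rotated])
qed

lemma edge_sub: "graph V E \<Longrightarrow> e \<in> E \<Longrightarrow> e \<subseteq> V"
  using edge_two by fastforce

lemma finite_E: "graph V E \<Longrightarrow> finite E"
proof -
  assume g: "graph V E"
  have "E \<subseteq> Pow V" using edge_sub[OF g] by blast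
  moreover have "finite V" using g by (simp add: graph_def)
  ultimately show ?thesis by (meson finite_Pow_iff finite_subset)
qed

lemma adj_conv: "(adj_rel E)\<inverse> = adj_rel E"
  by (auto simp: adj_rel_def insert_commute)

lemma adj_iff: "(x,y) \<in> adj_rel E \<longleftrightarrow> {x,y} \<in> E"
  by (simp add: adj_rel_def)

lemma rt_sym: "(x,y) \<in> (adj_rel E)\<^sup>* \<Longrightarrow> (y,x) \<in> (adj_rel E)\<^sup>*"
proof -
  assume "(x,y) \<in> (adj_rel E)\<^sup>*"
  then have "(y,x) \<in> ((adj_rel E)\<inverse>)\<^sup>*" by (rule rtrancl_converseI)
  thus ?thesis by (simp only: adj_conv)
qed

lemma hub_connected:
  assumes "W \<noteq> {}" "\<forall>a\<in>W. (a,h) \<in> (adj_rel F)\<^sup>*"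
  shows "connected_graph W F"
  unfolding connected_graph_def
proof (intro conjI ballI)
  fix a b assume "a \<in> W" "b \<in> W"
  then have "(a,h) \<in> (adj_rel F)\<^sup>*" "(b,h) \<in> (adj_rel F)\<^sup>*" using assms by auto
  then show "(a,b) \<in> (adj_rel F)\<^sup>*" using rt_sym rtrancl_trans by fast
qed (use assms in auto)

lemma crossing:
  assumes g: "graph V E" and c: "connected_graph V E" and "V' \<subseteq> V" "u \<in> V'" "v \<in> V" "v \<notin> V'"
  shows "\<exists>x\<in>V'. \<exists>y. y \<in> V \<and> y \<notin> V' \<and> {x,y} \<in> E"
proof -
  have "(u,v) \<in> (adj_rel E)\<^sup>*" using assms unfolding connected_graph_def by auto
  then have "v \<notin> V' \<longrightarrow> (\<exists>x\<in>V'. \<exists>y. y \<in> V \<and> y \<notin> V' \<and> {x,y} \<in> E)"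
  proof (induction rule: rtrancl_induct)
    case base show ?case using assms by auto
  next
    case (step b d)
    from step.hyps(2) have bd: "{b,d} \<in> E" by (simp add: adj_rel_def)
    have "d \<in> V" using edge_sub[OF g bd] by blast
    show ?case
    proof
      assume "d \<notin> V'"
      show "\<exists>x\<in>V'. \<exists>y. y \<in> V \<and> y \<notin> V' \<and> {x,y} \<in> E"
      proof (cases "b \<in> V'")
        case True thus ?thesis using bd \<open>d\<in>V\<close> \<open>d \<notin> V'\<close> by blast
      next
        case False thus ?thesis using step.IH by blast
      qed
    qed
  qed
  thus ?thesis using assms by blast
qed

lemma grow:
  assumes g: "graph V E" and c: "connected_graph V E"
  shows "1 \<le> m \<Longrightarrow> m \<le> card V \<Longrightarrow> \<exists>V' E'. is_subtree V E V' E' \<and> card V' = m"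
proof (induction m)
  case 0 thus ?case by simp
next
  case (Suc m)
  have fV: "finite V" using g by (simp add: graph_def)
  show ?case
  proof (cases "m = 0")
    case True
    obtain v where v: "v \<in> V" using c unfolding connected_graph_def by blast
    have "is_subtree V E {v} {}"
      using v unfolding is_subtree_def connected_graph_def by simp
    thus ?thesis using True by fastforce
  next
    case False
    then obtain V' E' where t: "is_subtree V E V' E'" and cV': "card V' = m"
      using Suc by auto
    have sub: "V' \<subseteq> V" "E' \<subseteq> E" "\<forall>e\<in>E'. e \<subseteq> V'" "connected_graph V' E'" "card E' + 1 = card V'"
      using t unfolding is_subtree_def by auto
    have "V' \<noteq> V" using cV' Suc.prems by auto
    then obtain v where v: "v \<in> V" "v \<notin> V'" using sub(1) by blast
    obtain u where u: "u \<in> V'" using cV' False by fastforce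
    obtain x y where xy: "x \<in> V'" "y \<in> V" "y \<notin> V'" "{x,y} \<in> E"
      using crossing[OF g c sub(1) u v] by blast
    define V2 where "V2 = insert y V'"
    define E2 where "E2 = insert {x,y} E'"
    have fE': "finite E'" using finite_E[OF g] sub(2) finite_subset by blast
    have fV': "finite V'" using fV sub(1) finite_subset by blast
    have nin: "{x,y} \<notin> E'" using sub(3) xy(3) by blast
    have cE2: "card E2 = Suc (card E')" unfolding E2_def using fE' nin by simp
    have cV2: "card V2 = Suc (card V')" unfolding V2_def using fV' xy(3) by simp
    have mono: "(adj_rel E')\<^sup>* \<subseteq> (adj_rel E2)\<^sup>*"
      by (rule rtrancl_mono) (auto simp: adj_rel_def E2_def)
    have hub: "\<forall>a\<in>V2. (a,x) \<in> (adj_rel E2)\<^sup>*"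
    proof
      fix a assume "a \<in> V2"
      show "(a,x) \<in> (adj_rel E2)\<^sup>*"
      proof (cases "a = y")
        case True
        have "{y,x} = {x,y}" by (rule insert_commute)
        then have "(y,x) \<in> adj_rel E2" unfolding adj_rel_def E2_def by simp
        thus ?thesis using True by blast
      next
        case False
        then have "a \<in> V'" using \<open>a \<in> V2\<close> V2_def by blast
        then have "(a,x) \<in> (adj_rel E')\<^sup>*" using sub(4) xy(1) unfolding connected_graph_def by blast
        thus ?thesis using mono by blast
      qed
    qed
    have "connected_graph V2 E2" by (rule hub_connected[OF _ hub]) (simp add: V2_def)
    moreover have "V2 \<subseteq> V" using sub(1) xy(2) V2_def by blast
    moreover have "E2 \<subseteq> E" using sub(2) xy(4) E2_def by blast
    moreover have "\<forall>e\<in>E2. e \<subseteq> V2" using sub(3) xy(1) unfolding E2_def V2_def by blast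
    moreover have "card E2 + 1 = card V2" using cE2 cV2 sub(5) by simp
    ultimately have "is_subtree V E V2 E2"
      unfolding is_subtree_def by blast
    thus ?thesis using cV2 cV' by blast
  qed
qed

lemma spanning:
  assumes g: "graph V E" and c: "connected_graph V E"
  shows "\<exists>T. is_subtree V E V T"
proof -
  have fV: "finite V" using g by (simp add: graph_def)
  have "V \<noteq> {}" using c by (simp add: connected_graph_def)
  then have "1 \<le> card V" using fV by (simp add: Suc_leI card_gt_0_iff)
  then obtain V' T where t: "is_subtree V E V' T" "card V' = card V" using grow[OF g c] by blast
  have "V' = V" using card_subset_eq[OF fV _ t(2)] t(1) unfolding is_subtree_def by blast
  thus ?thesis using t by blast
qed



definition star_at :: "'a set \<Rightarrow> 'a set set \<Rightarrow> 'a \<Rightarrow> bool" where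
  "star_at V E z \<longleftrightarrow> z \<in> V \<and> (\<forall>x\<in>V. x \<noteq> z \<longrightarrow> {z,x} \<in> E) \<and> (\<forall>e\<in>E. z \<in> e)"

lemma covered:
  assumes t: "is_subtree V E W T" and c2: "2 \<le> card W" and x: "x \<in> W"
  shows "\<exists>z. {x,z} \<in> T"
proof -
  have "W - {x} \<noteq> {}"
  proof
    assume "W - {x} = {}"
    then have "W \<subseteq> {x}" by blast
    then have "card W \<le> card {x}" by (intro card_mono) auto
    then have "card W \<le> 1" by simp
    thus False using c2 by simp
  qed
  then obtain y where y: "y \<in> W" "y \<noteq> x" by blast
  have "connected_graph W T" using t unfolding is_subtree_def by simp
  then have "(x,y) \<in> (adj_rel T)\<^sup>*" using x y unfolding connected_graph_def by simp
  then show ?thesis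
  proof (cases rule: converse_rtranclE)
    case base thus ?thesis using y by simp
  next
    case (step z) thus ?thesis by (auto simp: adj_rel_def)
  qed
qed

lemma coloring_from_tree:
  assumes g: "graph V E" and t: "is_subtree V E V T" and e: "e1 \<in> T" "e2 \<in> T" "e1 \<inter> e2 = {}" "e1 \<noteq> e2"
  shows "\<exists>c. k_proper_coloring k V E c \<and> card (c ` E) \<le> card V - 2"
proof -
  have TE: "T \<subseteq> E" and cT: "card T + 1 = card V" using t unfolding is_subtree_def by auto
  have fT: "finite T" using finite_E[OF g] TE finite_subset by blast
  obtain h where h: "bij_betw h (T - {e2}) {0..<card (T - {e2})}"
    using ex_bij_betw_finite_nat[of "T - {e2}"] fT by blast
  have inj: "inj_on h (T - {e2})" using h bij_betw_def by blast
  define c where "c e = (if e \<in> T - {e2} then h e else h e1)" for e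
  have e1T: "e1 \<in> T - {e2}" using e by blast
  have "c ` E \<subseteq> h ` (T - {e2})" unfolding c_def using e1T by auto
  then have "card (c ` E) \<le> card (h ` (T - {e2}))" using fT by (simp add: card_mono)
  also have "\<dots> = card (T - {e2})" using inj by (simp add: card_image)
  also have "\<dots> = card V - 2" using cT e(2) fT by simp
  finally have card: "card (c ` E) \<le> card V - 2" .
  have propr: "proper_edges c T"
    unfolding proper_edges_def
  proof (intro ballI impI)
    fix a b assume ab: "a \<in> T" "b \<in> T" "a \<noteq> b \<and> a \<inter> b \<noteq> {}"
    show "c a \<noteq> c b"
    proof (cases "a = e2")
      case True
      then have "b \<in> T - {e2}" "b \<noteq> e1" using ab e by auto
      then show ?thesis using True inj e1T unfolding c_def by (auto dest: inj_onD)
    next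
      case False
      show ?thesis
      proof (cases "b = e2")
        case True
        then have "a \<in> T - {e2}" "a \<noteq> e1" using ab e by auto
        then show ?thesis using True inj e1T unfolding c_def by (auto dest: inj_onD)
      next
        case False
        then show ?thesis using \<open>a \<noteq> e2\<close> ab inj unfolding c_def by (auto dest: inj_onD)
      qed
    qed
  qed
  have "k_proper_coloring k V E c"
    unfolding k_proper_coloring_def using t propr by blast
  thus ?thesis using card by blast
qed

lemma pairwise_common:
  assumes two: "\<forall>e\<in>T. \<exists>a b. e = {a,b} \<and> a \<noteq> b"
    and pw: "\<forall>e1\<in>T. \<forall>e2\<in>T. e1 \<inter> e2 \<noteq> {}"
    and e0: "e0 \<in> T"
    and cov: "\<forall>x\<in>W. \<exists>e\<in>T. x \<in> e"
    and fW: "finite W" and cW: "4 \<le> card W"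
  shows "\<exists>v. \<forall>e\<in>T. v \<in> e"
proof (rule ccontr)
  assume nc: "\<not> (\<exists>v. \<forall>e\<in>T. v \<in> e)"
  obtain a b where ab: "e0 = {a,b}" "a \<noteq> b" using two e0 by blast
  obtain e2 where e2: "e2 \<in> T" "a \<notin> e2" using nc by blast
  obtain e3 where e3: "e3 \<in> T" "b \<notin> e3" using nc by blast
  obtain p q where pq: "e2 = {p,q}" "p \<noteq> q" using two e2 by blast
  obtain r s where rs: "e3 = {r,s}" "r \<noteq> s" using two e3 by blast
  have "e0 \<inter> e2 \<noteq> {}" using pw e0 e2 by blast
  then have be2: "b \<in> e2" using ab e2(2) by blast
  define cc where "cc = (if p = b then q else p)"
  have c2: "e2 = {b,cc}" "cc \<noteq> b" "cc \<noteq> a"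
    using pq be2 e2(2) unfolding cc_def by auto
  have "e0 \<inter> e3 \<noteq> {}" using pw e0 e3 by blast
  then have ae3: "a \<in> e3" using ab e3(2) by blast
  define d where "d = (if r = a then s else r)"
  have d3: "e3 = {a,d}" "d \<noteq> a" "d \<noteq> b"
    using rs ae3 e3(2) unfolding d_def by auto
  have "e2 \<inter> e3 \<noteq> {}" using pw e2 e3 by blast
  then have "d = cc" using c2 d3 ab by auto
  have sub: "\<forall>e\<in>T. e \<subseteq> {a,b,cc}"
  proof
    fix e assume e: "e \<in> T"
    obtain x y where xy: "e = {x,y}" "x \<noteq> y" using two e by blast
    have i1: "e \<inter> {a,b} \<noteq> {}" using pw e e0 ab by blast
    have i2: "e \<inter> {b,cc} \<noteq> {}" using pw e e2 c2 by blast
    have i3: "e \<inter> {a,cc} \<noteq> {}" using pw e e3 d3 \<open>d = cc\<close> by blast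
    have "x \<in> {a,b,cc}"
    proof (rule ccontr)
      assume "x \<notin> {a,b,cc}"
      then have "y \<in> {a,b}" "y \<in> {b,cc}" "y \<in> {a,cc}" using i1 i2 i3 xy(1) by auto
      thus False using ab(2) c2(2,3) by auto
    qed
    moreover have "y \<in> {a,b,cc}"
    proof (rule ccontr)
      assume "y \<notin> {a,b,cc}"
      then have "x \<in> {a,b}" "x \<in> {b,cc}" "x \<in> {a,cc}" using i1 i2 i3 xy(1) by auto
      thus False using ab(2) c2(2,3) by auto
    qed
    ultimately show "e \<subseteq> {a,b,cc}" using xy(1) by simp
  qed
  then have "W \<subseteq> {a,b,cc}" using cov by blast
  then have "card W \<le> card {a,b,cc}" by (intro card_mono) auto
  also have "\<dots> \<le> 3" by (simp add: card_insert_if)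
  finally show False using cW by simp
qed


lemma star_atD:
  assumes "star_at V E z"
  shows "z \<in> V" "\<And>w. w \<in> V \<Longrightarrow> w \<noteq> z \<Longrightarrow> {z,w} \<in> E" "\<And>e. e \<in> E \<Longrightarrow> z \<in> e"
  using assms unfolding star_at_def by auto

lemma E_char:
  assumes g: "graph V E" and st: "star_at V E z" and x: "x \<in> V" and y: "y \<in> V"
  shows "{x,y} \<in> E \<longleftrightarrow> x \<noteq> y \<and> (x = z \<or> y = z)"
proof
  assume e: "{x,y} \<in> E"
  obtain a b where ab: "{x,y} = {a,b}" "a \<noteq> b" using edge_two[OF g e] by auto
  have "x \<noteq> y"
  proof
    assume "x = y"
    then have "{a,b} = {x}" using ab by simp
    then have "a = x" "b = x" by (simp_all add: insert_eq_iff)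
    then show False using ab(2) by simp
  qed
  moreover have "z \<in> {x,y}" using star_atD(3)[OF st e] .
  ultimately show "x \<noteq> y \<and> (x = z \<or> y = z)" by auto
next
  assume h: "x \<noteq> y \<and> (x = z \<or> y = z)"
  show "{x,y} \<in> E"
  proof (cases "x = z")
    case True thus ?thesis using h star_atD(2)[OF st y] by simp
  next
    case False
    then have "y = z" using h by simp
    have "{y,x} = {x,y}" by (rule insert_commute)
    moreover have "{z,x} \<in> E" using star_atD(2)[OF st x] False by simp
    ultimately show ?thesis using \<open>y = z\<close> by simp
  qed
qed

lemma nonstar_tree:
  assumes g: "graph V E" and c: "connected_graph V E" and cV: "4 \<le> card V"
    and ns: "\<not> (\<exists>z. star_at V E z)"
  shows "\<exists>T e1 e2. is_subtree V E V T \<and> e1 \<in> T \<and> e2 \<in> T \<and> e1 \<inter> e2 = {} \<and> e1 \<noteq> e2"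
proof -
  obtain T where t: "is_subtree V E V T" using spanning[OF g c] by blast
  have TE: "T \<subseteq> E" and cT: "card T + 1 = card V" using t unfolding is_subtree_def by auto
  have fV: "finite V" using g by (simp add: graph_def)
  show ?thesis
  proof (cases "\<exists>e1\<in>T. \<exists>e2\<in>T. e1 \<inter> e2 = {}")
    case True
    then obtain e1 e2 where e: "e1 \<in> T" "e2 \<in> T" "e1 \<inter> e2 = {}" by blast
    obtain a b where "e1 = {a,b}" using edge_two[OF g] e(1) TE by blast
    then have "e1 \<noteq> e2" using e(3) by auto
    thus ?thesis using t e by blast
  next
    case False
    then have pw: "\<forall>e1\<in>T. \<forall>e2\<in>T. e1 \<inter> e2 \<noteq> {}" by blast
    have two: "\<forall>e\<in>T. \<exists>a b. e = {a,b} \<and> a \<noteq> b"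
    proof
      fix e assume "e \<in> T"
      then have "e \<in> E" using TE by blast
      from edge_two[OF g this] show "\<exists>a b. e = {a,b} \<and> a \<noteq> b" by blast
    qed
    have "T \<noteq> {}" using cT cV by auto
    then obtain e0 where e0: "e0 \<in> T" by blast
    have cov: "\<forall>x\<in>V. \<exists>e\<in>T. x \<in> e"
    proof
      fix x assume "x \<in> V"
      then obtain p where "{x,p} \<in> T" using covered[OF t] cV by fastforce
      thus "\<exists>e\<in>T. x \<in> e" by blast
    qed
    obtain v where v: "\<forall>e\<in>T. v \<in> e" using pairwise_common[OF two pw e0 cov fV cV] by blast
    have vV: "v \<in> V" using v e0 edge_sub[OF g] TE by blast
    have all: "\<forall>x\<in>V. x \<noteq> v \<longrightarrow> {v,x} \<in> E"
    proof (intro ballI impI)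
      fix x assume x: "x \<in> V" "x \<noteq> v"
      have c2: "2 \<le> card V" using cV by simp
      obtain p where p: "{x,p} \<in> T" using covered[OF t c2 x(1)] by blast
      have "v \<in> {x,p}" using bspec[OF v p] .
      then have "p = v" using x(2) by auto
      then have "{v,x} = {x,p}" by (simp add: insert_commute)
      thus "{v,x} \<in> E" using p TE by auto
    qed
    then obtain e where e: "e \<in> E" "v \<notin> e" using ns vV unfolding star_at_def by blast
    obtain u w where uw: "e = {u,w}" "u \<noteq> w" "u \<in> V" "w \<in> V" using edge_two[OF g e(1)] by blast
    have uv: "u \<noteq> v" "w \<noteq> v" using uw e by auto
    have "card {v,u,w} \<le> 3" by (simp add: card_insert_if)
    have "\<not> V \<subseteq> {v,u,w}"
    proof
      assume "V \<subseteq> {v,u,w}"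
      then have "card V \<le> card {v,u,w}" by (intro card_mono) auto
      thus False using cV \<open>card {v,u,w} \<le> 3\<close> by linarith
    qed
    then obtain x where x: "x \<in> V" "x \<noteq> v" "x \<noteq> u" "x \<noteq> w" by blast
    define T' where "T' = insert {u,w} ((\<lambda>y. {v,y}) ` (V - {v,w}))"
    have T'E: "T' \<subseteq> E" unfolding T'_def using e uw all by auto
    have T'V: "\<forall>e\<in>T'. e \<subseteq> V" unfolding T'_def using uw vV by auto
    have hub: "\<forall>a\<in>V. (a,v) \<in> (adj_rel T')\<^sup>*"
    proof
      fix a assume a: "a \<in> V"
      have step: "(y,v) \<in> adj_rel T'" if "y \<in> V - {v,w}" for y
      proof -
        have "{y,v} = {v,y}" by (rule insert_commute)
        moreover have "{v,y} \<in> T'" unfolding T'_def using that by blast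
        ultimately show ?thesis by (simp add: adj_rel_def)
      qed
      show "(a,v) \<in> (adj_rel T')\<^sup>*"
      proof (cases "a = v")
        case True thus ?thesis by simp
      next
        case False
        show ?thesis
        proof (cases "a = w")
          case True
          have "{w,u} = {u,w}" by (rule insert_commute)
          then have "(w,u) \<in> adj_rel T'" unfolding T'_def adj_rel_def by simp
          moreover have "(u,v) \<in> adj_rel T'" using step uw uv by blast
          ultimately show ?thesis using True by (meson converse_rtrancl_into_rtrancl r_into_rtrancl)
        next
          case False
          then show ?thesis using step a \<open>a \<noteq> v\<close> by blast
        qed
      qed
    qed
    have conn: "connected_graph V T'" by (rule hub_connected[OF _ hub]) (use vV in blast)
    have inj: "inj_on (\<lambda>y. {v,y}) (V - {v,w})"
      by (rule inj_onI) (auto simp: doubleton_eq_iff)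
    have "card ((\<lambda>y. {v,y}) ` (V - {v,w})) = card (V - {v,w})" using inj by (simp add: card_image)
    also have "\<dots> = card V - 2" using vV uw uv fV by (simp add: card_Diff_subset)
    finally have c1: "card ((\<lambda>y. {v,y}) ` (V - {v,w})) = card V - 2" .
    have nin: "{u,w} \<notin> (\<lambda>y. {v,y}) ` (V - {v,w})" using uv by (auto simp: doubleton_eq_iff)
    have "card T' = Suc (card V - 2)" unfolding T'_def using c1 nin fV by simp
    then have cT': "card T' + 1 = card V" using cV by simp
    have "is_subtree V E V T'" unfolding is_subtree_def using T'E T'V conn cT' by blast
    moreover have "{v,x} \<in> T'" unfolding T'_def using x by blast
    moreover have "{u,w} \<in> T'" unfolding T'_def by blast
    moreover have "{v,x} \<inter> {u,w} = {}" using x uv by auto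
    moreover have "{v,x} \<noteq> {u,w}" using uv by (auto simp: doubleton_eq_iff)
    ultimately show ?thesis by blast
  qed
qed



lemma star_edges_iff:
  "{a,b} \<in> star_edges n \<longleftrightarrow> a \<noteq> b \<and> (a = 0 \<or> b = 0) \<and> a < n \<and> b < n"
proof
  assume "{a,b} \<in> star_edges n"
  then obtain i where i: "{a,b} = {0,i}" "0 < i" "i < n" unfolding star_edges_def by blast
  then show "a \<noteq> b \<and> (a = 0 \<or> b = 0) \<and> a < n \<and> b < n"
    by (auto simp: doubleton_eq_iff)
next
  assume h: "a \<noteq> b \<and> (a = 0 \<or> b = 0) \<and> a < n \<and> b < n"
  show "{a,b} \<in> star_edges n"
  proof (cases "a = 0")
    case True
    then have "{a,b} = {0,b}" "0 < b" "b < n" using h by auto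
    thus ?thesis unfolding star_edges_def by blast
  next
    case False
    then have "b = 0" using h by simp
    have "{a,b} = {0,a}" using \<open>b = 0\<close> by (simp add: insert_commute)
    moreover have "0 < a" "a < n" using False h by auto
    ultimately show ?thesis unfolding star_edges_def by blast
  qed
qed

lemma iso_star:
  assumes g: "graph V E" and cV: "card V = n" and n1: "1 \<le> n"
  shows "graph_iso V E (star_vertices n) (star_edges n) \<longleftrightarrow> (\<exists>z. star_at V E z)"
proof
  assume "graph_iso V E (star_vertices n) (star_edges n)"
  then obtain f where bij: "bij_betw f V {0..<n}"
    and iff: "\<forall>x\<in>V. \<forall>y\<in>V. {x,y} \<in> E \<longleftrightarrow> {f x, f y} \<in> star_edges n"
    unfolding graph_iso_def star_vertices_def by blast
  have inj: "inj_on f V" and img: "f ` V = {0..<n}" using bij unfolding bij_betw_def by auto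
  have "0 \<in> f ` V" using img n1 by auto
  then obtain z where z: "z \<in> V" "f z = 0" by (metis imageE)
  have fx: "f x < n" if "x \<in> V" for x using img that by auto
  have "star_at V E z"
    unfolding star_at_def
  proof (intro conjI ballI impI)
    show "z \<in> V" by (rule z(1))
  next
    fix x assume x: "x \<in> V" "x \<noteq> z"
    have "f x \<noteq> f z" using inj x z(1) by (metis inj_on_def)
    then have "{f z, f x} \<in> star_edges n" using z fx[OF x(1)] fx[OF z(1)] by (simp add: star_edges_iff)
    thus "{z,x} \<in> E" using iff z(1) x(1) by blast
  next
    fix e assume e: "e \<in> E"
    obtain a b where ab: "e = {a,b}" "a \<noteq> b" "a \<in> V" "b \<in> V" using edge_two[OF g e] by blast
    have "{f a, f b} \<in> star_edges n" using iff ab e by blast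
    then have "f a = 0 \<or> f b = 0" by (simp add: star_edges_iff)
    then have "a = z \<or> b = z" using inj ab z by (metis inj_on_def)
    thus "z \<in> e" using ab by blast
  qed
  thus "\<exists>z. star_at V E z" by blast
next
  assume "\<exists>z. star_at V E z"
  then obtain z where st: "star_at V E z" by blast
  have zV: "z \<in> V" using star_atD(1)[OF st] .
  have fV: "finite V" using g by (simp add: graph_def)
  have cVz: "card (V - {z}) = n - 1" using cV zV fV by simp
  obtain h where h: "bij_betw h (V - {z}) {0..<n-1}"
    using ex_bij_betw_finite_nat[of "V - {z}"] fV cVz by auto
  have hinj: "inj_on h (V - {z})" and himg: "h ` (V - {z}) = {0..<n-1}" using h unfolding bij_betw_def by auto
  define f where "f x = (if x = z then 0 else Suc (h x))" for x
  have f0: "f x = 0 \<longleftrightarrow> x = z" for x unfolding f_def by simp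
  have inj: "inj_on f V"
  proof (rule inj_onI)
    fix x y assume xy: "x \<in> V" "y \<in> V" "f x = f y"
    show "x = y"
    proof (cases "x = z \<or> y = z")
      case True thus ?thesis using xy(3) f0 by metis
    next
      case False
      then have "h x = h y" using xy(3) unfolding f_def by simp
      thus ?thesis using hinj xy False by (meson DiffI inj_onD singletonD)
    qed
  qed
  have sub: "f ` V \<subseteq> {0..<n}"
  proof
    fix a assume "a \<in> f ` V"
    then obtain x where x: "x \<in> V" "a = f x" by blast
    show "a \<in> {0..<n}"
    proof (cases "x = z")
      case True thus ?thesis using x n1 unfolding f_def by simp
    next
      case False
      then have "h x \<in> {0..<n-1}" using himg x by blast
      thus ?thesis using x False n1 unfolding f_def by auto
    qed
  qed
  have "card (f ` V) = card {0..<n}" using inj cV by (simp add: card_image)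
  then have img: "f ` V = {0..<n}" using card_subset_eq[OF _ sub] by simp
  have bij: "bij_betw f V {0..<n}" using inj img by (simp add: bij_betw_def)
  have iff: "\<forall>x\<in>V. \<forall>y\<in>V. {x,y} \<in> E \<longleftrightarrow> {f x, f y} \<in> star_edges n"
  proof (intro ballI)
    fix x y assume x: "x \<in> V" and y: "y \<in> V"
    have "{x,y} \<in> E \<longleftrightarrow> x \<noteq> y \<and> (x = z \<or> y = z)" by (rule E_char[OF g st x y])
    also have "\<dots> \<longleftrightarrow> f x \<noteq> f y \<and> (f x = 0 \<or> f y = 0) \<and> f x < n \<and> f y < n"
    proof -
      have "f x < n" "f y < n" using img x y by auto
      moreover have "f x = f y \<longleftrightarrow> x = y" using inj x y by (meson inj_onD)
      ultimately show ?thesis using f0 by auto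
    qed
    also have "\<dots> \<longleftrightarrow> {f x, f y} \<in> star_edges n" by (simp add: star_edges_iff)
    finally show "{x,y} \<in> E \<longleftrightarrow> {f x, f y} \<in> star_edges n" .
  qed
  show "graph_iso V E (star_vertices n) (star_edges n)"
    unfolding graph_iso_def star_vertices_def using bij iff by blast
qed



lemma star_index:
  assumes g: "graph V E" and c: "connected_graph V E" and st: "star_at V E z"
    and cV: "card V = n" and k2: "2 \<le> k" and kn: "k \<le> n"
  shows "proper_index k V E = n - 1"
proof -
  have fV: "finite V" using g by (simp add: graph_def)
  have fE: "finite E" using finite_E[OF g] .
  have zV: "z \<in> V" using star_atD(1)[OF st] .
  have Eeq: "E = (\<lambda>x. {z,x}) ` (V - {z})"
  proof
    show "(\<lambda>x. {z,x}) ` (V - {z}) \<subseteq> E" using star_atD(2)[OF st] by blast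
  next
    show "E \<subseteq> (\<lambda>x. {z,x}) ` (V - {z})"
    proof
      fix e assume e: "e \<in> E"
      obtain a b where ab: "e = {a,b}" "a \<noteq> b" "a \<in> V" "b \<in> V" using edge_two[OF g e] by blast
      have "z \<in> e" using star_atD(3)[OF st e] .
      show "e \<in> (\<lambda>x. {z,x}) ` (V - {z})"
      proof (cases "a = z")
        case True thus ?thesis using ab by blast
      next
        case False
        then have "b = z" using \<open>z \<in> e\<close> ab by blast
        then have "e = {z,a}" using ab by (simp add: insert_commute)
        thus ?thesis using ab False by blast
      qed
    qed
  qed
  have injz: "inj_on (\<lambda>x. {z,x}) (V - {z})"
    by (rule inj_onI) (auto simp: doubleton_eq_iff)
  have cE: "card E = n - 1" using Eeq injz cV zV fV by (simp add: card_image)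
  have n1: "1 \<le> n" using k2 kn by simp
  obtain h where h: "bij_betw h E {0..<card E}" using ex_bij_betw_finite_nat[OF fE] by blast
  have hinj: "inj_on h E" using h unfolding bij_betw_def by blast
  have subt: "is_subtree V E V E"
    unfolding is_subtree_def using c edge_sub[OF g] cE cV n1 by auto
  have "proper_edges h E" unfolding proper_edges_def using hinj by (auto dest: inj_onD)
  then have hk: "k_proper_coloring k V E h" unfolding k_proper_coloring_def using subt by blast
  have hc: "card (h ` E) = n - 1" using hinj cE by (simp add: card_image)
  have lower: "n - 1 \<le> card (c ` E)" if ck: "k_proper_coloring k V E c" for c
  proof -
    have "inj_on c E"
    proof (rule inj_onI, rule ccontr)
      fix e1 e2 assume e1: "e1 \<in> E" and e2: "e2 \<in> E" and ceq: "c e1 = c e2" and ne: "e1 \<noteq> e2"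
      obtain x where x: "x \<in> V - {z}" "e1 = {z,x}" using e1 Eeq by blast
      obtain y where y: "y \<in> V - {z}" "e2 = {z,y}" using e2 Eeq by blast
      have xy: "x \<noteq> y" using x y ne by blast
      have "card (V - {x,y}) = n - 2" using x y xy cV fV by (simp add: card_Diff_subset)
      then have "k - 2 \<le> card (V - {x,y})" using kn by simp
      then obtain S0 where S0: "S0 \<subseteq> V - {x,y}" "card S0 = k - 2" "finite S0"
        by (rule obtain_subset_with_card_n)
      define S where "S = insert x (insert y S0)"
      have SV: "S \<subseteq> V" using S0 x y unfolding S_def by blast
      have "x \<notin> insert y S0" "y \<notin> S0" using S0 xy by auto
      then have "card S = k" unfolding S_def using S0 k2 by simp
      then obtain V' E' where t: "is_subtree V E V' E'" and SV': "S \<subseteq> V'" and pr: "proper_edges c E'"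
        using ck SV unfolding k_proper_coloring_def by blast
      have V'V: "V' \<subseteq> V" and E'E: "E' \<subseteq> E" using t unfolding is_subtree_def by auto
      have xV': "x \<in> V'" and yV': "y \<in> V'" using SV' unfolding S_def by auto
      have "card {x,y} \<le> card V'" using xV' yV' V'V fV by (intro card_mono) (auto intro: finite_subset)
      then have c2: "2 \<le> card V'" using xy by simp
      have edge: "{w,z} \<in> E'" if w: "w \<in> V'" "w \<in> V - {z}" for w
      proof -
        obtain p where p: "{w,p} \<in> E'" using covered[OF t c2 w(1)] by blast
        then have wpE: "{w,p} \<in> E" using E'E by blast
        have "p \<in> V" using edge_sub[OF g wpE] by blast
        with wpE have "w \<noteq> p \<and> (w = z \<or> p = z)" using E_char[OF g st] w by blast
        then have "p = z" using w by blast
        thus ?thesis using p by simp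
      qed
      have "{x,z} \<in> E'" using edge xV' x(1) by blast
      moreover have "{y,z} \<in> E'" using edge yV' y(1) by blast
      moreover have "{x,z} = e1" "{y,z} = e2" using x y by (simp_all add: insert_commute)
      ultimately have "e1 \<in> E'" "e2 \<in> E'" by simp_all
      moreover have "e1 \<inter> e2 \<noteq> {}" using x y by auto
      ultimately have "c e1 \<noteq> c e2" using pr ne unfolding proper_edges_def by blast
      thus False using ceq by simp
    qed
    then show ?thesis using cE by (simp add: card_image)
  qed
  show ?thesis
    unfolding proper_index_def
  proof (rule Least_equality)
    show "\<exists>c. k_proper_coloring k V E c \<and> card (c ` E) = n - 1" using hk hc by blast
  next
    fix m assume "\<exists>c. k_proper_coloring k V E c \<and> card (c ` E) = m"
    then show "n - 1 \<le> m" using lower by blast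
  qed
qed

theorem mainTheorem16:
  fixes V :: "'a set" and E :: "'a set set" and n k :: nat
  assumes "graph V E" and "connected_graph V E"
    and "card V = n" and "n \<ge> 4"
    and "3 \<le> k" and "k \<le> n"
  shows "proper_index k V E = n - 1 \<longleftrightarrow> graph_iso V E (star_vertices n) (star_edges n)"
proof (cases "\<exists>z. star_at V E z")
  case True
  then obtain z where st: "star_at V E z" by blast
  have "proper_index k V E = n - 1"
    using star_index[OF assms(1,2) st assms(3)] assms(5,6) by simp
  moreover have "graph_iso V E (star_vertices n) (star_edges n)"
    using iso_star[OF assms(1,3)] assms(4) True by simp
  ultimately show ?thesis by simp
next
  case False
  have niso: "\<not> graph_iso V E (star_vertices n) (star_edges n)"
    using iso_star[OF assms(1,3)] assms(4) False by simp
  obtain T e1 e2 where T: "is_subtree V E V T" "e1 \<in> T" "e2 \<in> T" "e1 \<inter> e2 = {}" "e1 \<noteq> e2"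
    using nonstar_tree[OF assms(1,2)] assms(3,4) False by auto
  obtain c where c: "k_proper_coloring k V E c" "card (c ` E) \<le> card V - 2"
    using coloring_from_tree[OF assms(1) T] by blast
  have "proper_index k V E \<le> card (c ` E)"
    unfolding proper_index_def by (rule Least_le) (use c in blast)
  then have "proper_index k V E \<noteq> n - 1" using c(2) assms(3,4) by simp
  thus ?thesis using niso by simp
qed

end
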